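(* Let $(X,d)$ be a finite pseudometric space and let $A\subseteq X$ be a nonempty proper subset such that $d(i,j)=0$ for all $i,j\in A$. Let $\sigma:=A\,|\,A^c$. Then for every $\alpha_\sigma\ge0$, $$\operatorname{LIP}(X,d+\alpha_\sigma\delta_\sigma)=\operatorname{LIP}(X,d)+\alpha_\sigma S_\sigma .$$
   Context: Let $X$ be a finite set, $n:=|X|$, $\{\mathbbm 1_k\}_{k\in X}$ the standard basis of $\mathbb R^X$, and $\mathbbm 1_A:=\sum_{x\in A}\mathbbm 1_x$. A split of $X$ is an unordered pair of nonempty disjoint subsets $A,B$ with $A\cup B=X$, written $A|B$. For a split $\sigma=A|B$, $\delta_\sigma(i,j)=0$ if $i,j$ lie in the same side and $1$ otherwise, and $S_\sigma:=\operatorname{conv}\{\tfrac{|B|}{n}\mathbbm 1_A-\tfrac{|A|}{n}\mathbbm 1_B,\ \tfrac{|A|}{n}\mathbbm 1_B-\tfrac{|B|}{n}\mathbbm 1_A\}\subseteq\mathbb R^X$; $cS_\sigma$ denotes its scaling by $c\ge 0$, and $+$ is Minkowski sum. For a pseudometric $d$ on $X$ (symmetric, nonnegative, $d(x,x)=0$, triangle inequality; distinct points may have distance 0), $\operatorname{LIP}(X,d):=\{x\in\mathbb R^X\mid\sum_i x_i=0,\ x_i-x_j\le d(i,j)\ \forall i,j\in X\}$. *)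

theory Defs
  imports Complex_Main
begin

text \<open>Vectors in R^X are modelled as functions 'a => real vanishing outside X.\<close>

definition pseudometric_on :: "'a set \<Rightarrow> ('a \<Rightarrow> 'a \<Rightarrow> real) \<Rightarrow> bool" where
  "pseudometric_on X d \<longleftrightarrow>
     (\<forall>i\<in>X. d i i = 0) \<and>
     (\<forall>i\<in>X. \<forall>j\<in>X. d i j = d j i \<and> d i j \<ge> 0) \<and>
     (\<forall>i\<in>X. \<forall>j\<in>X. \<forall>k\<in>X. d i k \<le> d i j + d j k)"

definition indic_vec :: "'a set \<Rightarrow> 'a \<Rightarrow> real" where
  "indic_vec A = (\<lambda>x. if x \<in> A then 1 else 0)"

definition LIP :: "'a set \<Rightarrow> ('a \<Rightarrow> 'a \<Rightarrow> real) \<Rightarrow> ('a \<Rightarrow> real) set" where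
  "LIP X d = {x. (\<forall>i. i \<notin> X \<longrightarrow> x i = 0) \<and> (\<Sum>i\<in>X. x i) = 0 \<and>
                  (\<forall>i\<in>X. \<forall>j\<in>X. x i - x j \<le> d i j)}"

definition split_delta :: "'a set \<Rightarrow> 'a set \<Rightarrow> 'a \<Rightarrow> 'a \<Rightarrow> real" where
  "split_delta A B i j = (if (i \<in> A \<and> j \<in> A) \<or> (i \<in> B \<and> j \<in> B) then 0 else 1)"

definition split_segment :: "'a set \<Rightarrow> 'a set \<Rightarrow> ('a \<Rightarrow> real) set" where
  "split_segment A B =
     (let n = real (card (A \<union> B));
          v = (\<lambda>i. (real (card B) / n) * indic_vec A i - (real (card A) / n) * indic_vec B i)
      in {(\<lambda>i. t * v i + (1 - t) * (- v i)) | t. 0 \<le> t \<and> t \<le> 1})"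
  \<comment> \<open>convex hull of the two points v and -v, written out as convex combinations\<close>

definition minkowski_sum :: "('a \<Rightarrow> real) set \<Rightarrow> ('a \<Rightarrow> real) set \<Rightarrow> ('a \<Rightarrow> real) set" where
  "minkowski_sum P Q = {(\<lambda>i. p i + q i) | p q. p \<in> P \<and> q \<in> Q}"

end

theory Submission
  imports Defs
begin

theorem mainTheorem3:
  fixes X A :: "'a set" and d :: "'a \<Rightarrow> 'a \<Rightarrow> real" and \<alpha> :: real
  assumes "finite X"
    and "pseudometric_on X d"
    and "A \<subseteq> X" and "A \<noteq> {}" and "A \<noteq> X"
    and "\<forall>i\<in>A. \<forall>j\<in>A. d i j = 0"
    and "\<alpha> \<ge> 0"
  shows "LIP X (\<lambda>i j. d i j + \<alpha> * split_delta A (X - A) i j)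
         = minkowski_sum (LIP X d) ((\<lambda>v i. \<alpha> * v i) ` split_segment A (X - A))"
proof -
  define B where "B = X - A"
  define n where "n = real (card (A \<union> B))"
  define v where "v = (\<lambda>i. (real (card B) / n) * indic_vec A i - (real (card A) / n) * indic_vec B i)"
  have seg: "split_segment A B = {(\<lambda>i. t * v i + (1 - t) * (- v i)) | t. 0 \<le> t \<and> t \<le> 1}"
    unfolding split_segment_def Let_def v_def n_def by simp
  have AB: "A \<union> B = X" "A \<inter> B = {}" using assms(3) unfolding B_def by auto
  have finA: "finite A" and finB: "finite B" using assms(1,3) unfolding B_def by (auto intro: finite_subset)
  have Bne: "B \<noteq> {}" using assms(3,5) unfolding B_def by auto
  have nn: "n = real (card A) + real (card B)" unfolding n_def using card_Un_disjoint[OF finA finB AB(2)] by simp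
  have cApos: "card A > 0" using finA assms(4) by (simp add: card_gt_0_iff)
  have npos: "n > 0" using nn cApos by simp
  have vA: "v i = real (card B) / n" if "i \<in> A" for i
    using that AB unfolding v_def indic_vec_def by auto
  have vB: "v i = - real (card A) / n" if "i \<in> B" for i
    using that AB unfolding v_def indic_vec_def by auto
  have vout: "v i = 0" if "i \<notin> X" for i
    using that AB unfolding v_def indic_vec_def by auto
  have vdiff: "v i - v j = 1" if "i \<in> A" "j \<in> B" for i j
  proof -
    have "v i - v j = (real (card B) + real (card A)) / n" using vA[OF that(1)] vB[OF that(2)] by (simp add: diff_divide_distrib add_divide_distrib)
    also have "\<dots> = 1" using nn npos by simp
    finally show ?thesis .
  qed
  have vsum: "(\<Sum>i\<in>X. v i) = 0"
  proof -
    have "(\<Sum>i\<in>X. v i) = (\<Sum>i\<in>A. v i) + (\<Sum>i\<in>B. v i)"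
      using sum.union_disjoint[OF finA finB AB(2)] AB(1) by simp
    also have "\<dots> = real (card A) * (real (card B) / n) + real (card B) * (- real (card A) / n)"
      using vA vB by simp
    also have "\<dots> = 0" by (simp add: field_simps)
    finally show ?thesis .
  qed
  have dA: "\<forall>i\<in>A. \<forall>j\<in>A. split_delta A B i j = 0" unfolding split_delta_def by auto
  have dB: "\<forall>i\<in>B. \<forall>j\<in>B. split_delta A B i j = 0" unfolding split_delta_def by auto
  have dAB: "split_delta A B i j = 1" if "i \<in> A" "j \<in> B" for i j
    using that AB unfolding split_delta_def by auto
  have dBA: "split_delta A B i j = 1" if "i \<in> B" "j \<in> A" for i j
    using that AB unfolding split_delta_def by auto
  have dsym: "\<And>i j. i \<in> X \<Longrightarrow> j \<in> X \<Longrightarrow> d i j = d j i"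
    and dtri: "\<And>i j k. i \<in> X \<Longrightarrow> j \<in> X \<Longrightarrow> k \<in> X \<Longrightarrow> d i k \<le> d i j + d j k"
    using assms(2) unfolding pseudometric_on_def by auto
  have XAB: "i \<in> X \<longleftrightarrow> i \<in> A \<or> i \<in> B" for i using AB by auto
  have "LIP X (\<lambda>i j. d i j + \<alpha> * split_delta A B i j)
         = minkowski_sum (LIP X d) ((\<lambda>v i. \<alpha> * v i) ` split_segment A B)"
  proof
    show "minkowski_sum (LIP X d) ((\<lambda>v i. \<alpha> * v i) ` split_segment A B)
          \<subseteq> LIP X (\<lambda>i j. d i j + \<alpha> * split_delta A B i j)"
    proof
      fix x assume "x \<in> minkowski_sum (LIP X d) ((\<lambda>v i. \<alpha> * v i) ` split_segment A B)"
      then obtain y t where y: "y \<in> LIP X d" and t: "0 \<le> t" "t \<le> 1"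
        and x: "x = (\<lambda>i. y i + \<alpha> * (t * v i + (1 - t) * (- v i)))"
        unfolding minkowski_sum_def seg by auto
      define s where "s = \<alpha> * (2 * t - 1)"
      have x2: "x i = y i + s * v i" for i unfolding x s_def by (simp add: algebra_simps)
      have s: "\<bar>s\<bar> \<le> \<alpha>" unfolding s_def 
      proof -
        have "\<bar>2 * t - 1\<bar> \<le> 1" using t by auto
        hence "\<alpha> * \<bar>2 * t - 1\<bar> \<le> \<alpha> * 1" using assms(7) by (intro mult_left_mono) auto
        thus "\<bar>\<alpha> * (2 * t - 1)\<bar> \<le> \<alpha>" using assms(7) by (simp add: abs_mult)
      qed
      have y0: "\<forall>i. i \<notin> X \<longrightarrow> y i = 0" and ys: "(\<Sum>i\<in>X. y i) = 0"
        and yl: "\<forall>i\<in>X. \<forall>j\<in>X. y i - y j \<le> d i j" using y unfolding LIP_def by auto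
      have "(\<Sum>i\<in>X. x i) = (\<Sum>i\<in>X. y i) + s * (\<Sum>i\<in>X. v i)"
        unfolding x2 by (simp add: sum.distrib sum_distrib_left)
      hence xs: "(\<Sum>i\<in>X. x i) = 0" using ys vsum by simp
      have xl: "x i - x j \<le> d i j + \<alpha> * split_delta A B i j" if "i \<in> X" "j \<in> X" for i j
      proof -
        have e: "x i - x j = (y i - y j) + s * (v i - v j)" unfolding x2 by (simp add: algebra_simps)
        have yy: "y i - y j \<le> d i j" using yl that by auto
        have "i \<in> A \<or> i \<in> B" "j \<in> A \<or> j \<in> B" using that AB by auto
        then consider "i \<in> A" "j \<in> A" | "i \<in> B" "j \<in> B" | "i \<in> A" "j \<in> B" | "i \<in> B" "j \<in> A"
          by blast
        then show ?thesis
        proof cases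
          case 1 then show ?thesis using e yy vA dA by simp
        next
          case 2 then show ?thesis using e yy vB dB by simp
        next
          case 3 then show ?thesis using e yy vdiff[OF 3] dAB[OF 3] s by simp
        next
          case 4
          have "v i - v j = -1" using vdiff[OF 4(2,1)] by simp
          then show ?thesis using e yy dBA[OF 4] s by simp
        qed
      qed
      show "x \<in> LIP X (\<lambda>i j. d i j + \<alpha> * split_delta A B i j)"
        unfolding LIP_def using xs xl y0 vout x2 by auto
    qed
  next
    show "LIP X (\<lambda>i j. d i j + \<alpha> * split_delta A B i j)
          \<subseteq> minkowski_sum (LIP X d) ((\<lambda>v i. \<alpha> * v i) ` split_segment A B)"
    proof
      fix x assume xL: "x \<in> LIP X (\<lambda>i j. d i j + \<alpha> * split_delta A B i j)"
      have x0: "\<forall>i. i \<notin> X \<longrightarrow> x i = 0" and xs: "(\<Sum>i\<in>X. x i) = 0"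
        and xl: "\<forall>i\<in>X. \<forall>j\<in>X. x i - x j \<le> d i j + \<alpha> * split_delta A B i j"
        using xL unfolding LIP_def by auto
      obtain a0 where a0: "a0 \<in> A" using assms(4) by auto
      have a0X: "a0 \<in> X" using a0 AB by auto
      define c where "c = x a0"
      define D where "D = (\<lambda>j. d a0 j)"
      have xA: "x i = c" if "i \<in> A" for i
      proof -
        have "i \<in> X" using that AB by auto
        then have "x i - x a0 \<le> d i a0 + \<alpha> * split_delta A B i a0"
           "x a0 - x i \<le> d a0 i + \<alpha> * split_delta A B a0 i" using xl a0X by auto
        moreover have "d i a0 = 0" "d a0 i = 0" "split_delta A B i a0 = 0" "split_delta A B a0 i = 0"
          using assms(6) dA that a0 by auto
        ultimately have "x i - x a0 \<le> 0" "x a0 - x i \<le> 0" by simp_all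
        then show ?thesis unfolding c_def by simp
      qed
      define L where "L = Max (insert (- \<alpha>) ((\<lambda>j. c - x j - D j) ` B))"
      have finL: "finite (insert (- \<alpha>) ((\<lambda>j. c - x j - D j) ` B))" using finB by simp
      have Lge1: "- \<alpha> \<le> L" unfolding L_def using finL by (intro Max_ge) auto
      have Lge2: "c - x j - D j \<le> L" if "j \<in> B" for j unfolding L_def using finL that by (intro Max_ge) auto
      have Lle: "L \<le> r" if "- \<alpha> \<le> r" "\<forall>j\<in>B. c - x j - D j \<le> r" for r
        unfolding L_def using finL that by (subst Max_le_iff) auto
      have Lalpha: "L \<le> \<alpha>"
      proof (rule Lle)
        show "- \<alpha> \<le> \<alpha>" using assms(7) by simp
        show "\<forall>j\<in>B. c - x j - D j \<le> \<alpha>"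
        proof
          fix j assume j: "j \<in> B"
          have "x a0 - x j \<le> d a0 j + \<alpha> * split_delta A B a0 j" using xl a0X j AB by auto
          then show "c - x j - D j \<le> \<alpha>" unfolding c_def D_def using dAB[OF a0 j] by simp
        qed
      qed
      have LU: "L \<le> c - x i + D i" if i: "i \<in> B" for i
      proof (rule Lle)
        have iX: "i \<in> X" using i AB by auto
        have "x i - x a0 \<le> d i a0 + \<alpha> * split_delta A B i a0" using xl a0X iX by auto
        then show "- \<alpha> \<le> c - x i + D i" unfolding c_def D_def using dBA[OF i a0] dsym[OF iX a0X] by simp
        show "\<forall>j\<in>B. c - x j - D j \<le> c - x i + D i"
        proof
          fix k assume k: "k \<in> B"
          have kX: "k \<in> X" using k AB by auto
          have "x i - x k \<le> d i k + \<alpha> * split_delta A B i k" using xl kX iX by auto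
          hence "x i - x k \<le> d i k" using dB i k by simp
          moreover have "d i k \<le> d i a0 + d a0 k" using dtri[OF iX a0X kX] .
          ultimately show "c - x k - D k \<le> c - x i + D i"
            unfolding D_def using dsym[OF iX a0X] by simp
        qed
      qed
      define y where "y = (\<lambda>i. x i - L * v i)"
      have y0: "\<forall>i. i \<notin> X \<longrightarrow> y i = 0" unfolding y_def using x0 vout by simp
      have "(\<Sum>i\<in>X. y i) = (\<Sum>i\<in>X. x i) - L * (\<Sum>i\<in>X. v i)"
        unfolding y_def by (simp add: sum_subtractf sum_distrib_left)
      hence ys: "(\<Sum>i\<in>X. y i) = 0" using xs vsum by simp
      have yl: "y i - y j \<le> d i j" if "i \<in> X" "j \<in> X" for i j
      proof -
        have e: "y i - y j = (x i - x j) - L * (v i - v j)" unfolding y_def by (simp add: algebra_simps)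
        have xx: "x i - x j \<le> d i j + \<alpha> * split_delta A B i j" using xl that by auto
        have "i \<in> A \<or> i \<in> B" "j \<in> A \<or> j \<in> B" using that AB by auto
        then consider "i \<in> A" "j \<in> A" | "i \<in> B" "j \<in> B" | "i \<in> A" "j \<in> B" | "i \<in> B" "j \<in> A"
          by blast
        then show ?thesis
        proof cases
          case 1
          have "v i = v j" using vA[OF 1(1)] vA[OF 1(2)] by simp
          moreover have "split_delta A B i j = 0" using dA 1 by blast
          ultimately show ?thesis using e xx by simp
        next
          case 2
          have "v i = v j" using vB[OF 2(1)] vB[OF 2(2)] by simp
          moreover have "split_delta A B i j = 0" using dB 2 by blast
          ultimately show ?thesis using e xx by simp
        next
          case 3
          have "D j \<le> d a0 i + d i j" unfolding D_def using dtri[OF a0X that] .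
          hence "D j \<le> d i j" using assms(6) a0 3 by simp
          then show ?thesis using e vdiff[OF 3] Lge2[OF 3(2)] xA[OF 3(1)] by simp
        next
          case 4
          have "v i - v j = -1" using vdiff[OF 4(2,1)] by simp
          have "D i \<le> d a0 j + d j i" unfolding D_def using dtri[OF a0X that(2,1)] .
          moreover have "d j i = d i j" using dsym[OF that(2,1)] .
          moreover have "d a0 j = 0" using assms(6) a0 4 by simp
          ultimately have "D i \<le> d i j" by simp
          then show ?thesis using e \<open>v i - v j = -1\<close> LU[OF 4(1)] xA[OF 4(2)] by simp
        qed
      qed
      have yLIP: "y \<in> LIP X d" unfolding LIP_def using y0 ys yl by auto
      define s where "s = L / \<alpha>"
      have as: "\<alpha> * s = L"
      proof (cases "\<alpha> = 0")
        case True then show ?thesis using Lge1 Lalpha s_def by simp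
      next
        case False then show ?thesis using s_def by simp
      qed
      have sb: "-1 \<le> s \<and> s \<le> 1"
      proof (cases "\<alpha> = 0")
        case True
        show ?thesis using s_def True by auto
      next
        case False
        then have ap: "\<alpha> > 0" using assms(7) by simp
        have "-1 \<le> s" unfolding s_def using Lge1 ap by (simp add: field_simps)
        moreover have "s \<le> 1" unfolding s_def using Lalpha ap by (simp add: field_simps)
        ultimately show ?thesis by simp
      qed
      define t where "t = (s + 1) / 2"
      have t: "0 \<le> t" "t \<le> 1" using sb t_def by auto
      define q where "q = (\<lambda>i. t * v i + (1 - t) * (- v i))"
      have qs: "q \<in> split_segment A B" unfolding seg q_def using t by auto
      have xeq: "x = (\<lambda>i. y i + (\<lambda>i. \<alpha> * q i) i)"
      proof
        fix i
        have "q i = (2 * t - 1) * v i" unfolding q_def by (simp add: algebra_simps)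
        also have "2 * t - 1 = s" unfolding t_def by (simp add: field_simps)
        finally have "\<alpha> * q i = \<alpha> * s * v i" by simp
        then show "x i = y i + (\<lambda>i. \<alpha> * q i) i" unfolding y_def using as by simp
      qed
      show "x \<in> minkowski_sum (LIP X d) ((\<lambda>v i. \<alpha> * v i) ` split_segment A B)"
      proof -
        have "(\<lambda>i. \<alpha> * q i) \<in> (\<lambda>v i. \<alpha> * v i) ` split_segment A B" using qs by blast
        then show ?thesis unfolding minkowski_sum_def mem_Collect_eq using yLIP xeq
          by (intro exI[of _ y] exI[of _ "\<lambda>i. \<alpha> * q i"]) simp
      qed
    qed
  qed
  then show ?thesis unfolding B_def .
qed

end
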